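(* Let $\mathfrak F=(X,\parallel,Y,S_\vee)$ be a frame satisfying axioms (F0)–(F4). Then for every family $(A_j)_{j\in J}$ of stable sets, $\overline\eta_S\big(\bigvee_{j\in J}A_j\big)=\bigvee_{j\in J}\overline\eta_S(A_j)$, where the left join is taken in $\mathcal G(X)$ and the right join in $\mathcal G(Y)$.
   Context: A polarity is $(X,\parallel,Y)$ with $X,Y$ nonempty sets and ${\parallel}\subseteq X\times Y$; $I=(X\times Y)\setminus{\parallel}$. For $U\subseteq X$, $U'=\{y\in Y:\forall x\in U\;x\parallel y\}$; for $V\subseteq Y$, $V'=\{x\in X:\forall y\in V\;x\parallel y\}$. $A\subseteq X$ is stable if $A=A''$; $B\subseteq Y$ is co-stable if $B=B''$; $\mathcal G(X),\mathcal G(Y)$ are the complete lattices of stable/co-stable sets (meets = intersections, joins $\bigvee_jA_j=(\bigcup_jA_j)''$). Preorders: $x\preceq z$ iff $\{x\}'\subseteq\{z\}'$ on $X$; $y\preceq v$ iff $\{y\}'\subseteq\{v\}'$ on $Y$; separated means both are partial orders ($\leq$). $\Gamma u=\{w:u\preceq w\}$. Closed elements: sets $\Gamma x$ in $\mathcal G(X)$, $\Gamma y$ in $\mathcal G(Y)$. A frame is $(X,\parallel,Y,S_\vee)$ with $S_\vee\subseteq Y\times X$; $S_\vee x=\{y:yS_\vee x\}$, $yS_\vee=\{x:yS_\vee x\}$; $zS'_\vee x$ iff $\forall y(yS_\vee x\Rightarrow z\parallel y)$. Axioms: (F0) $\forall x\exists y\;xIy$, $\forall y\exists x\;xIy$;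 (F1) separated; (F2) each $S_\vee x$ is a closed element of $\mathcal G(Y)$; (F3) each $yS_\vee$ is a down-set; (F4) for each $x$, $\{z:zS'_\vee x\}\in\mathcal G(X)$ and for each $z$, $\{x:zS'_\vee x\}\in\mathcal G(X)$. For $A\in\mathcal G(X)$, $\overline\eta_S(A)=(\bigcup_{x\in A}S_\vee x)''$. *)

theory Defs
  imports Main
begin

text \<open>Polarity (X, par, Y): par x y means x \<parallel> y. Relation data outside X, Y is ignored.\<close>

definition primeX :: "'x set \<Rightarrow> ('x \<Rightarrow> 'y \<Rightarrow> bool) \<Rightarrow> 'y set \<Rightarrow> 'x set \<Rightarrow> 'y set" where
  "primeX X par Y U = {y \<in> Y. \<forall>x\<in>U. par x y}"

definition primeY :: "'x set \<Rightarrow> ('x \<Rightarrow> 'y \<Rightarrow> bool) \<Rightarrow> 'y set \<Rightarrow> 'y set \<Rightarrow> 'x set" where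
  "primeY X par Y V = {x \<in> X. \<forall>y\<in>V. par x y}"

definition stable :: "'x set \<Rightarrow> ('x \<Rightarrow> 'y \<Rightarrow> bool) \<Rightarrow> 'y set \<Rightarrow> 'x set \<Rightarrow> bool" where
  "stable X par Y A \<longleftrightarrow> A \<subseteq> X \<and> A = primeY X par Y (primeX X par Y A)"

definition costable :: "'x set \<Rightarrow> ('x \<Rightarrow> 'y \<Rightarrow> bool) \<Rightarrow> 'y set \<Rightarrow> 'y set \<Rightarrow> bool" where
  "costable X par Y B \<longleftrightarrow> B \<subseteq> Y \<and> B = primeX X par Y (primeY X par Y B)"

definition joinX :: "'x set \<Rightarrow> ('x \<Rightarrow> 'y \<Rightarrow> bool) \<Rightarrow> 'y set \<Rightarrow> 'j set \<Rightarrow> ('j \<Rightarrow> 'x set) \<Rightarrow> 'x set" where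
  "joinX X par Y J A = primeY X par Y (primeX X par Y (\<Union>j\<in>J. A j))"

definition joinY :: "'x set \<Rightarrow> ('x \<Rightarrow> 'y \<Rightarrow> bool) \<Rightarrow> 'y set \<Rightarrow> 'j set \<Rightarrow> ('j \<Rightarrow> 'y set) \<Rightarrow> 'y set" where
  "joinY X par Y J B = primeX X par Y (primeY X par Y (\<Union>j\<in>J. B j))"

definition leX :: "'x set \<Rightarrow> ('x \<Rightarrow> 'y \<Rightarrow> bool) \<Rightarrow> 'y set \<Rightarrow> 'x \<Rightarrow> 'x \<Rightarrow> bool" where
  "leX X par Y x z \<longleftrightarrow> primeX X par Y {x} \<subseteq> primeX X par Y {z}"

definition leY :: "'x set \<Rightarrow> ('x \<Rightarrow> 'y \<Rightarrow> bool) \<Rightarrow> 'y set \<Rightarrow> 'y \<Rightarrow> 'y \<Rightarrow> bool" where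
  "leY X par Y y v \<longleftrightarrow> primeY X par Y {y} \<subseteq> primeY X par Y {v}"

definition GammaX :: "'x set \<Rightarrow> ('x \<Rightarrow> 'y \<Rightarrow> bool) \<Rightarrow> 'y set \<Rightarrow> 'x \<Rightarrow> 'x set" where
  "GammaX X par Y x = {w \<in> X. leX X par Y x w}"

definition GammaY :: "'x set \<Rightarrow> ('x \<Rightarrow> 'y \<Rightarrow> bool) \<Rightarrow> 'y set \<Rightarrow> 'y \<Rightarrow> 'y set" where
  "GammaY X par Y y = {w \<in> Y. leY X par Y y w}"

definition closedY :: "'x set \<Rightarrow> ('x \<Rightarrow> 'y \<Rightarrow> bool) \<Rightarrow> 'y set \<Rightarrow> 'y set \<Rightarrow> bool" where
  "closedY X par Y B \<longleftrightarrow> (\<exists>y\<in>Y. B = GammaY X par Y y)"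

definition Sx :: "'y set \<Rightarrow> ('y \<Rightarrow> 'x \<Rightarrow> bool) \<Rightarrow> 'x \<Rightarrow> 'y set" where
  "Sx Y S x = {y \<in> Y. S y x}"

definition Sprime :: "('x \<Rightarrow> 'y \<Rightarrow> bool) \<Rightarrow> 'y set \<Rightarrow> ('y \<Rightarrow> 'x \<Rightarrow> bool) \<Rightarrow> 'x \<Rightarrow> 'x \<Rightarrow> bool" where
  "Sprime par Y S z x \<longleftrightarrow> (\<forall>y\<in>Y. S y x \<longrightarrow> par z y)"

definition frame :: "'x set \<Rightarrow> ('x \<Rightarrow> 'y \<Rightarrow> bool) \<Rightarrow> 'y set \<Rightarrow> ('y \<Rightarrow> 'x \<Rightarrow> bool) \<Rightarrow> bool" where
  "frame X par Y S \<longleftrightarrow>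
     X \<noteq> {} \<and> Y \<noteq> {} \<and> (\<forall>y x. S y x \<longrightarrow> y \<in> Y \<and> x \<in> X) \<and>
     \<comment> \<open>(F0)\<close>
     (\<forall>x\<in>X. \<exists>y\<in>Y. \<not> par x y) \<and> (\<forall>y\<in>Y. \<exists>x\<in>X. \<not> par x y) \<and>
     \<comment> \<open>(F1) separated\<close>
     (\<forall>x\<in>X. \<forall>z\<in>X. leX X par Y x z \<and> leX X par Y z x \<longrightarrow> x = z) \<and>
     (\<forall>y\<in>Y. \<forall>v\<in>Y. leY X par Y y v \<and> leY X par Y v y \<longrightarrow> y = v) \<and>
     \<comment> \<open>(F2)\<close>
     (\<forall>x\<in>X. closedY X par Y (Sx Y S x)) \<and>
     \<comment> \<open>(F3) each y S is a down-set of X\<close>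
     (\<forall>y\<in>Y. \<forall>x\<in>X. \<forall>z\<in>X. leX X par Y x z \<and> S y z \<longrightarrow> S y x) \<and>
     \<comment> \<open>(F4)\<close>
     (\<forall>x\<in>X. stable X par Y {z \<in> X. Sprime par Y S z x}) \<and>
     (\<forall>z\<in>X. stable X par Y {x \<in> X. Sprime par Y S z x})"

definition etaS :: "'x set \<Rightarrow> ('x \<Rightarrow> 'y \<Rightarrow> bool) \<Rightarrow> 'y set \<Rightarrow> ('y \<Rightarrow> 'x \<Rightarrow> bool) \<Rightarrow> 'x set \<Rightarrow> 'y set" where
  "etaS X par Y S A = primeX X par Y (primeY X par Y (\<Union>x\<in>A. Sx Y S x))"

end

theory Submission
  imports Defs
begin

lemma pX_anti: "U \<subseteq> V \<Longrightarrow> primeX X par Y V \<subseteq> primeX X par Y U"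
  unfolding primeX_def by auto
lemma pY_anti: "U \<subseteq> V \<Longrightarrow> primeY X par Y V \<subseteq> primeY X par Y U"
  unfolding primeY_def by auto
lemma pXY_ext: "V \<subseteq> Y \<Longrightarrow> V \<subseteq> primeX X par Y (primeY X par Y V)"
  unfolding primeX_def primeY_def by auto
lemma pYX_ext: "U \<subseteq> X \<Longrightarrow> U \<subseteq> primeY X par Y (primeX X par Y U)"
  unfolding primeX_def primeY_def by auto
lemma pX_sub: "primeX X par Y U \<subseteq> Y" unfolding primeX_def by auto
lemma pY_sub: "primeY X par Y U \<subseteq> X" unfolding primeY_def by auto

lemma clY_idem: "primeX X par Y (primeY X par Y (primeX X par Y (primeY X par Y V)))
   = primeX X par Y (primeY X par Y V)"
proof
  show "primeX X par Y (primeY X par Y (primeX X par Y (primeY X par Y V)))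
   \<subseteq> primeX X par Y (primeY X par Y V)"
    by (intro pX_anti pYX_ext pY_sub)
  show "primeX X par Y (primeY X par Y V)
    \<subseteq> primeX X par Y (primeY X par Y (primeX X par Y (primeY X par Y V)))"
    by (intro pXY_ext pX_sub)
qed

lemma clY_mono: "V \<subseteq> W \<Longrightarrow> primeX X par Y (primeY X par Y V) \<subseteq> primeX X par Y (primeY X par Y W)"
  by (intro pX_anti pY_anti)

lemma clY_le: "V \<subseteq> primeX X par Y (primeY X par Y W) \<Longrightarrow>
   primeX X par Y (primeY X par Y V) \<subseteq> primeX X par Y (primeY X par Y W)"
proof -
  assume "V \<subseteq> primeX X par Y (primeY X par Y W)"
  hence "primeX X par Y (primeY X par Y V) \<subseteq> primeX X par Y (primeY X par Y (primeX X par Y (primeY X par Y W)))"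
    by (rule clY_mono)
  thus ?thesis by (simp only: clY_idem)
qed

lemma stable_cl: "stable X par Y B \<Longrightarrow> U \<subseteq> B \<Longrightarrow> primeY X par Y (primeX X par Y U) \<subseteq> B"
proof -
  assume a: "stable X par Y B" and b: "U \<subseteq> B"
  have "primeY X par Y (primeX X par Y U) \<subseteq> primeY X par Y (primeX X par Y B)"
    by (intro pY_anti pX_anti b)
  also have "\<dots> = B" using a unfolding stable_def by (elim conjE) (rule sym)
  finally show ?thesis .
qed

theorem proposition3p11:
  fixes X :: "'x set" and Y :: "'y set" and par :: "'x \<Rightarrow> 'y \<Rightarrow> bool"
    and S :: "'y \<Rightarrow> 'x \<Rightarrow> bool" and J :: "'j set" and A :: "'j \<Rightarrow> 'x set"
  assumes "frame X par Y S"
    and "\<forall>j\<in>J. stable X par Y (A j)"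
  shows "etaS X par Y S (joinX X par Y J A) = joinY X par Y J (\<lambda>j. etaS X par Y S (A j))"
proof -
  let ?c = "\<lambda>V. primeX X par Y (primeY X par Y V)"
  define U where "U = (\<Union>j\<in>J. A j)"
  define T where "T = (\<Union>x\<in>U. Sx Y S x)"
  have UX: "U \<subseteq> X" unfolding U_def
  proof (rule UN_least)
    fix j assume "j \<in> J"
    hence "stable X par Y (A j)" using assms(2) by (rule_tac bspec)
    thus "A j \<subseteq> X" unfolding stable_def by (rule conjunct1)
  qed
  have F4: "\<forall>z\<in>X. stable X par Y {x \<in> X. Sprime par Y S z x}"
    using assms(1) unfolding frame_def by (elim conjE) assumption
  have c1: "(\<Union>x\<in>primeY X par Y (primeX X par Y U). Sx Y S x) \<subseteq> ?c T"
  proof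
    fix y assume "y \<in> (\<Union>x\<in>primeY X par Y (primeX X par Y U). Sx Y S x)"
    then obtain x where x: "x \<in> primeY X par Y (primeX X par Y U)" and y: "y \<in> Sx Y S x" by auto
    have "\<forall>z\<in>primeY X par Y T. par z y"
    proof
      fix z assume z: "z \<in> primeY X par Y T"
      hence zX: "z \<in> X" and zT: "\<forall>y'\<in>T. par z y'" unfolding primeY_def by auto
      have "U \<subseteq> {x \<in> X. Sprime par Y S z x}"
        using UX zT unfolding T_def Sprime_def Sx_def by auto
      hence "x \<in> {x \<in> X. Sprime par Y S z x}" using stable_cl[OF F4[rule_format, OF zX]] x by blast
      thus "par z y" using y unfolding Sprime_def Sx_def by auto
    qed
    moreover have "y \<in> Y" using y unfolding Sx_def by auto
    ultimately show "y \<in> ?c T" unfolding primeX_def by auto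
  qed
  have LHS: "etaS X par Y S (joinX X par Y J A) = ?c T"
  proof
    show "etaS X par Y S (joinX X par Y J A) \<subseteq> ?c T"
      unfolding etaS_def joinX_def U_def[symmetric] by (rule clY_le[OF c1])
    have "T \<subseteq> (\<Union>x\<in>primeY X par Y (primeX X par Y U). Sx Y S x)"
      unfolding T_def using pYX_ext[OF UX, of par Y] by auto
    thus "?c T \<subseteq> etaS X par Y S (joinX X par Y J A)"
      unfolding etaS_def joinX_def U_def[symmetric] by (rule clY_mono)
  qed
  have RHS: "joinY X par Y J (\<lambda>j. etaS X par Y S (A j)) = ?c T"
  proof
    have "(\<Union>j\<in>J. etaS X par Y S (A j)) \<subseteq> ?c T"
      unfolding etaS_def T_def U_def by (intro UN_least clY_mono) auto
    thus "joinY X par Y J (\<lambda>j. etaS X par Y S (A j)) \<subseteq> ?c T"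
      unfolding joinY_def by (rule clY_le)
    have "T \<subseteq> (\<Union>j\<in>J. etaS X par Y S (A j))"
    proof
      fix y assume "y \<in> T"
      then obtain j x where j: "j \<in> J" "x \<in> A j" "y \<in> Sx Y S x" unfolding T_def U_def by auto
      hence "y \<in> (\<Union>x\<in>A j. Sx Y S x)" by auto
      moreover have "(\<Union>x\<in>A j. Sx Y S x) \<subseteq> Y" unfolding Sx_def by auto
      ultimately have "y \<in> etaS X par Y S (A j)" unfolding etaS_def using pXY_ext[of "\<Union>x\<in>A j. Sx Y S x" Y X par] by blast
      thus "y \<in> (\<Union>j\<in>J. etaS X par Y S (A j))" using j by auto
    qed
    thus "?c T \<subseteq> joinY X par Y J (\<lambda>j. etaS X par Y S (A j))"
      unfolding joinY_def by (rule clY_mono)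
  qed
  show ?thesis using LHS RHS by simp
qed

end
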